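(* Let $T$ be a sparse tournament of order $n>4$ and let $\sigma$ be a sparse ordering of $V(T)$. Then for every vertex $v$ with $d^-(v)=i$, the position of $v$ in $\sigma$ (positions numbered $1,\dots,n$) belongs to $\{i,i+1,i+2\}\cap[n]$.
   Context: A tournament is a digraph with exactly one arc between each pair of distinct vertices; $d^-(v)$ is the in-degree of $v$ and $[n]=\{1,\dots,n\}$. For an ordering $\sigma$ of $V(T)$, an arc $(x,y)$ is backward if $y$ precedes $x$ in $\sigma$. An ordering is sparse if every vertex is incident to at most one backward arc; a tournament is sparse if it admits a sparse ordering. *)

theory Defs
  imports Main
begin

text \<open>A digraph is given by a vertex set V and an arc relation A (A x y means the arc (x,y)).\<close>

definition tournament :: "'a set \<Rightarrow> ('a \<Rightarrow> 'a \<Rightarrow> bool) \<Rightarrow> bool" where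
  "tournament V A \<longleftrightarrow> finite V
     \<and> (\<forall>x y. A x y \<longrightarrow> x \<in> V \<and> y \<in> V)
     \<and> (\<forall>x. \<not> A x x)
     \<and> (\<forall>x\<in>V. \<forall>y\<in>V. x \<noteq> y \<longrightarrow> (A x y \<longleftrightarrow> \<not> A y x))"

definition in_degree :: "'a set \<Rightarrow> ('a \<Rightarrow> 'a \<Rightarrow> bool) \<Rightarrow> 'a \<Rightarrow> nat" where
  "in_degree V A v = card {u \<in> V. A u v}"

text \<open>An ordering of V is a list enumerating V without repetition; the position of v is
  its (1-based) index in the list.\<close>

definition is_ordering :: "'a set \<Rightarrow> 'a list \<Rightarrow> bool" where
  "is_ordering V \<sigma> \<longleftrightarrow> distinct \<sigma> \<and> set \<sigma> = V"

definition pos :: "'a list \<Rightarrow> 'a \<Rightarrow> nat" where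
  "pos \<sigma> v = Suc (THE k. k < length \<sigma> \<and> \<sigma> ! k = v)"

definition backward :: "('a \<Rightarrow> 'a \<Rightarrow> bool) \<Rightarrow> 'a list \<Rightarrow> 'a \<times> 'a \<Rightarrow> bool" where
  "backward A \<sigma> e \<longleftrightarrow> A (fst e) (snd e) \<and> pos \<sigma> (snd e) < pos \<sigma> (fst e)"

definition sparse_ordering :: "'a set \<Rightarrow> ('a \<Rightarrow> 'a \<Rightarrow> bool) \<Rightarrow> 'a list \<Rightarrow> bool" where
  "sparse_ordering V A \<sigma> \<longleftrightarrow> is_ordering V \<sigma> \<and>
     (\<forall>v\<in>V. card {e. backward A \<sigma> e \<and> (fst e = v \<or> snd e = v)} \<le> 1)"

definition sparse_tournament :: "'a set \<Rightarrow> ('a \<Rightarrow> 'a \<Rightarrow> bool) \<Rightarrow> bool" where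
  "sparse_tournament V A \<longleftrightarrow> tournament V A \<and> (\<exists>\<sigma>. sparse_ordering V A \<sigma>)"

end

theory Submission
  imports Defs
begin

lemma pos_nth:
  assumes "distinct xs" "j < length xs"
  shows "pos xs (xs ! j) = Suc j"
proof -
  have "(THE k. k < length xs \<and> xs ! k = xs ! j) = j"
    using assms by (auto simp: nth_eq_iff_index_eq)
  thus ?thesis by (simp add: pos_def)
qed

theorem mainTheorem10:
  fixes V :: "'a set" and A :: "'a \<Rightarrow> 'a \<Rightarrow> bool" and \<sigma> :: "'a list"
  assumes "sparse_tournament V A"
    and "card V > 4"
    and "sparse_ordering V A \<sigma>"
    and "v \<in> V"
    and "in_degree V A v = i"
  shows "pos \<sigma> v \<in> {i, i+1, i+2} \<inter> {1..card V}"
proof -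
  have T: "tournament V A" using assms(1) by (simp add: sparse_tournament_def)
  have fin: "finite V" using T unfolding tournament_def by blast
  have inV: "\<And>x y. A x y \<Longrightarrow> x \<in> V \<and> y \<in> V" using T unfolding tournament_def by blast
  have irr: "\<And>x. \<not> A x x" using T unfolding tournament_def by blast
  have tot: "\<And>x y. x \<in> V \<Longrightarrow> y \<in> V \<Longrightarrow> x \<noteq> y \<Longrightarrow> A x y \<longleftrightarrow> \<not> A y x"
    using T unfolding tournament_def by blast
  have dist: "distinct \<sigma>" and setV: "set \<sigma> = V"
    using assms(3) by (auto simp: sparse_ordering_def is_ordering_def)
  define E where "E = {e. backward A \<sigma> e \<and> (fst e = v \<or> snd e = v)}"
  have E1: "card E \<le> 1" using assms(3,4) by (simp add: sparse_ordering_def E_def)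
  have lenV: "length \<sigma> = card V" using dist setV distinct_card by fastforce
  obtain k where k: "k < length \<sigma>" "\<sigma> ! k = v"
    using assms(4) setV by (metis in_set_conv_nth)
  have pv: "pos \<sigma> v = Suc k" using pos_nth[OF dist k(1)] k(2) by simp
  have posinj: "\<And>u w. u \<in> V \<Longrightarrow> w \<in> V \<Longrightarrow> pos \<sigma> u = pos \<sigma> w \<Longrightarrow> u = w"
  proof -
    fix u w assume "u \<in> V" "w \<in> V" "pos \<sigma> u = pos \<sigma> w"
    then obtain a b where "a < length \<sigma>" "\<sigma>!a = u" "b < length \<sigma>" "\<sigma>!b = w"
      using setV by (metis in_set_conv_nth)
    thus "u = w" using pos_nth[OF dist] \<open>pos \<sigma> u = pos \<sigma> w\<close> by auto
  qed
  define B where "B = {u \<in> V. pos \<sigma> u < pos \<sigma> v}"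
  have Beq: "B = (!) \<sigma> ` {..<k}"
  proof
    show "B \<subseteq> (!) \<sigma> ` {..<k}"
    proof
      fix u assume uB: "u \<in> B"
      hence uV: "u \<in> V" and lt: "pos \<sigma> u < pos \<sigma> v" by (auto simp: B_def)
      obtain a where a: "a < length \<sigma>" "\<sigma>!a = u"
        using uV setV by (metis in_set_conv_nth)
      have "pos \<sigma> u = Suc a" using pos_nth[OF dist a(1)] a(2) by simp
      hence "a < k" using lt pv by simp
      thus "u \<in> (!) \<sigma> ` {..<k}" using a(2) by blast
    qed
    show "(!) \<sigma> ` {..<k} \<subseteq> B"
    proof
      fix u assume "u \<in> (!) \<sigma> ` {..<k}"
      then obtain j where j: "j < k" "u = \<sigma>!j" by blast
      have jl: "j < length \<sigma>" using j k(1) by simp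
      have "u \<in> V" using j(2) jl setV nth_mem by blast
      moreover have "pos \<sigma> u = Suc j" using pos_nth[OF dist jl] j(2) by simp
      ultimately show "u \<in> B" using pv j(1) by (simp add: B_def)
    qed
  qed
  have cB: "card B = k"
  proof -
    have "inj_on ((!) \<sigma>) {..<k}" using inj_on_nth[OF dist, of "{..<k}"] k(1) by simp
    hence "card ((!) \<sigma> ` {..<k}) = k" by (simp add: card_image)
    thus ?thesis using Beq by simp
  qed
  define B1 where "B1 = {u \<in> B. A v u}"
  define B2 where "B2 = {u \<in> V. pos \<sigma> v < pos \<sigma> u \<and> A u v}"
  have finB: "finite B" "finite B1" "finite B2"
    using fin by (auto simp: B_def B1_def B2_def)
  have Seq: "{u \<in> V. A u v} = (B - B1) \<union> B2"
  proof (rule set_eqI, rule iffI)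
    fix u assume u: "u \<in> {u \<in> V. A u v}"
    hence "u \<noteq> v" using irr by auto
    hence "pos \<sigma> u \<noteq> pos \<sigma> v" using posinj[of u v] u assms(4) by blast
    show "u \<in> (B - B1) \<union> B2"
    proof (cases "pos \<sigma> u < pos \<sigma> v")
      case True
      hence "u \<in> B" using u by (simp add: B_def)
      moreover have "\<not> A v u" using tot[of u v] u assms(4) \<open>u \<noteq> v\<close> by blast
      ultimately show ?thesis by (simp add: B1_def)
    next
      case False
      hence "pos \<sigma> v < pos \<sigma> u" using \<open>pos \<sigma> u \<noteq> pos \<sigma> v\<close> by simp
      hence "u \<in> B2" using u by (simp add: B2_def)
      thus ?thesis by blast
    qed
  next
    fix u assume u: "u \<in> (B - B1) \<union> B2"
    show "u \<in> {u \<in> V. A u v}"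
    proof (cases "u \<in> B2")
      case True thus ?thesis by (simp add: B2_def)
    next
      case False
      hence "u \<in> B" "\<not> A v u" using u by (auto simp: B1_def)
      hence "u \<in> V" "u \<noteq> v" by (auto simp: B_def)
      hence "A u v" using tot[of u v] assms(4) \<open>\<not> A v u\<close> by blast
      thus ?thesis using \<open>u \<in> V\<close> by simp
    qed
  qed
  have disj: "(B - B1) \<inter> B2 = {}" unfolding B_def B2_def by auto
  have B1B: "B1 \<subseteq> B" by (auto simp: B1_def)
  have ci: "i = k - card B1 + card B2"
    using assms(5) unfolding in_degree_def Seq
    using card_Un_disjoint[OF _ _ disj] finB card_Diff_subset[OF finB(2) B1B] cB
    by simp
  have finE: "finite E"
  proof (rule finite_subset[of _ "V \<times> V"])
    show "E \<subseteq> V \<times> V" using inV by (auto simp: E_def backward_def)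
  qed (use fin in auto)
  have sub: "(\<lambda>u. (v,u)) ` B1 \<union> (\<lambda>u. (u,v)) ` B2 \<subseteq> E"
    unfolding E_def backward_def B1_def B2_def B_def by auto
  have d2: "(\<lambda>u. (v,u)) ` B1 \<inter> (\<lambda>u. (u,v)) ` B2 = {}"
    unfolding B1_def B2_def B_def by auto
  have "card ((\<lambda>u. (v,u)) ` B1 \<union> (\<lambda>u. (u,v)) ` B2) = card B1 + card B2"
    using card_Un_disjoint[OF _ _ d2] finB
    by (simp add: card_image inj_on_def)
  hence "card B1 + card B2 \<le> 1" using card_mono[OF finE sub] E1 by linarith
  moreover have "card B1 \<le> k" using cB card_mono[OF finB(1) B1B] by linarith
  ultimately have "Suc k = i \<or> Suc k = i+1 \<or> Suc k = i+2" using ci by linarith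
  hence "Suc k \<in> {i, i+1, i+2}" by blast
  moreover have "Suc k \<in> {1..card V}" using k(1) lenV by simp
  ultimately show ?thesis unfolding pv by blast
qed

end
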